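(* Let $G$ be a graph, and let $u$ and $v$ be non-adjacent vertices of $G$ with $d_G(u)\geq 1$. Then $$C_u(G+uv)-C_u(G)\leq \frac{2}{d_G(u)+1},$$ with equality if and only if $N_G(u)\subseteq N_G(v)$ and $N_G(u)$ is an independent set in $G$.
   Context: All graphs are finite and simple; $G+uv$ denotes the graph obtained from $G$ by adding the edge $uv$. For a vertex $w$ of a graph $G$, $N_G(w)$ is its neighborhood, $d_G(w)$ its degree, and $m(G[N_G(w)])$ the number of edges of the subgraph induced by $N_G(w)$. The clustering coefficient of $w$ in $G$ is $C_w(G)=m(G[N_G(w)])/\binom{d_G(w)}{2}$ if $d_G(w)\geq 2$, and $C_w(G)=0$ otherwise. *)

theory Defs
  imports Complex_Main
begin

definition simple_graph :: "'a set \<Rightarrow> 'a set set \<Rightarrow> bool" where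
  "simple_graph V E \<longleftrightarrow> finite V \<and> (\<forall>e\<in>E. e \<subseteq> V \<and> card e = 2)"

definition adjacent :: "'a set set \<Rightarrow> 'a \<Rightarrow> 'a \<Rightarrow> bool" where
  "adjacent E x y \<longleftrightarrow> {x, y} \<in> E"

definition add_edge :: "'a set set \<Rightarrow> 'a \<Rightarrow> 'a \<Rightarrow> 'a set set" where
  "add_edge E u v = insert {u, v} E"

definition nbhd :: "'a set \<Rightarrow> 'a set set \<Rightarrow> 'a \<Rightarrow> 'a set" where
  "nbhd V E w = {x \<in> V. adjacent E w x}"

definition degree :: "'a set \<Rightarrow> 'a set set \<Rightarrow> 'a \<Rightarrow> nat" where
  "degree V E w = card (nbhd V E w)"

definition induced_edges :: "'a set set \<Rightarrow> 'a set \<Rightarrow> nat" where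
  "induced_edges E S = card {e \<in> E. e \<subseteq> S}"

definition clustering :: "'a set \<Rightarrow> 'a set set \<Rightarrow> 'a \<Rightarrow> real" where
  "clustering V E w =
     (if degree V E w \<ge> 2
      then real (induced_edges E (nbhd V E w)) / real (degree V E w choose 2)
      else 0)"

definition independent_set :: "'a set \<Rightarrow> 'a set set \<Rightarrow> 'a set \<Rightarrow> bool" where
  "independent_set V E S \<longleftrightarrow> S \<subseteq> V \<and> (\<forall>x\<in>S. \<forall>y\<in>S. \<not> adjacent E x y)"

end

theory Submission
  imports Defs
begin

lemma two_choose: "2 * (n choose 2) = n * (n - 1)"
  by (induction n) (auto simp: choose_two)

lemma real_choose2: "real (n choose 2) = real n * (real n - 1) / 2"
proof -
  have "real (2 * (n choose 2)) = real (n * (n - 1))" by (simp only: two_choose)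
  hence h: "2 * real (n choose 2) = real n * real (n - 1)" by simp
  show ?thesis
  proof (cases n)
    case 0 thus ?thesis by simp
  next
    case (Suc k)
    hence "real (n - 1) = real n - 1" by simp
    thus ?thesis using h by simp
  qed
qed

lemma arith_main:
  fixes d m k :: real
  assumes d: "d \<ge> 2" and m: "m \<ge> 0" and k0: "k \<ge> 0" and k: "k \<le> d"
  shows "(m + k) / ((d + 1) * d / 2) - m / (d * (d - 1) / 2)
       = 2 / (d + 1) - (2 * (d - k) * (d - 1) + 4 * m) / (d * (d + 1) * (d - 1))"
proof -
  have a: "d \<noteq> 0" "d - 1 \<noteq> 0" "d + 1 \<noteq> 0" using d by auto
  have b: "d * (d - 1) \<noteq> 0" "(d + 1) * d \<noteq> 0" "d * (d + 1) * (d - 1) \<noteq> 0" using a by auto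
  have "(m + k) / ((d + 1) * d / 2) = 2 * (m + k) / (d * (d + 1))"
    by (simp add: field_simps)
  also have "\<dots> = 2 * (m + k) * (d - 1) / (d * (d + 1) * (d - 1))"
    using a(2) by (rule nonzero_mult_divide_mult_cancel_right[symmetric])
  moreover have "m / (d * (d - 1) / 2) = 2 * m * (d + 1) / (d * (d + 1) * (d - 1))"
  proof -
    have "m / (d * (d - 1) / 2) = 2 * m / (d * (d - 1))" by (simp add: field_simps)
    also have "\<dots> = 2 * m * (d + 1) / (d * (d - 1) * (d + 1))"
      using a(3) by (rule nonzero_mult_divide_mult_cancel_right[symmetric])
    also have "\<dots> = 2 * m * (d + 1) / (d * (d + 1) * (d - 1))" by (simp add: mult_ac)
    finally show ?thesis .
  qed
  moreover have "2 / (d + 1) = 2 * d * (d - 1) / (d * (d + 1) * (d - 1))"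
  proof -
    have "2 * d * (d - 1) / (d * (d + 1) * (d - 1)) = (2 * (d * (d - 1))) / ((d + 1) * (d * (d - 1)))"
      by (simp add: mult_ac)
    also have "\<dots> = 2 / (d + 1)" using b(1) by (rule nonzero_mult_divide_mult_cancel_right)
    finally show ?thesis by simp
  qed
  moreover have "2 * (m + k) * (d - 1) - 2 * m * (d + 1) = 2 * d * (d - 1) - (2 * (d - k) * (d - 1) + 4 * m)"
    by (simp add: algebra_simps)
  ultimately show ?thesis by (metis diff_divide_distrib)
qed

theorem mainTheorem5:
  fixes V :: "'a set" and E :: "'a set set" and u v :: 'a
  assumes "simple_graph V E"
    and "u \<in> V" and "v \<in> V" and "u \<noteq> v"
    and "\<not> adjacent E u v"
    and "degree V E u \<ge> 1"
  shows "clustering V (add_edge E u v) u - clustering V E u \<le> 2 / (real (degree V E u) + 1)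
    \<and> (clustering V (add_edge E u v) u - clustering V E u = 2 / (real (degree V E u) + 1)
        \<longleftrightarrow> nbhd V E u \<subseteq> nbhd V E v \<and> independent_set V E (nbhd V E u))"
proof -
  note sg = assms(1)[unfolded simple_graph_def]
  have finV: "finite V" using sg by blast
  have edge: "\<And>e. e \<in> E \<Longrightarrow> e \<subseteq> V \<and> card e = 2" using sg by blast
  define N where "N = nbhd V E u"
  define d where "d = card N"
  have dN: "degree V E u = d" unfolding d_def N_def degree_def by simp
  have NV: "N \<subseteq> V" unfolding N_def nbhd_def by auto
  have finN: "finite N" using NV finV finite_subset by blast
  have uN: "u \<notin> N"
  proof
    assume "u \<in> N"
    hence "{u} \<in> E" unfolding N_def nbhd_def adjacent_def by simp
    thus False using edge by fastforce
  qed
  have vN: "v \<notin> N" using assms(5) unfolding N_def nbhd_def by simp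
  have N': "nbhd V (add_edge E u v) u = insert v N"
    unfolding N_def nbhd_def adjacent_def add_edge_def using assms(3,4)
    by (auto simp: doubleton_eq_iff)
  have d': "degree V (add_edge E u v) u = d + 1"
    unfolding degree_def N' d_def using finN vN by simp
  define F where "F = {e \<in> E. e \<subseteq> N}"
  define K where "K = {e \<in> E. e \<subseteq> insert v N \<and> v \<in> e}"
  define I where "I = N \<inter> nbhd V E v"
  have finE: "finite E" using edge finV
    by (metis (no_types, lifting) Pow_iff finite_Pow_iff rev_finite_subset subsetI)
  have finF: "finite F" "finite K" unfolding F_def K_def using finE by auto
  have "{e \<in> add_edge E u v. e \<subseteq> insert v N} = {e \<in> E. e \<subseteq> insert v N}"
    unfolding add_edge_def using uN assms(4) by auto
  also have "\<dots> = F \<union> K" unfolding F_def K_def using vN by auto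
  finally have eqFK: "{e \<in> add_edge E u v. e \<subseteq> insert v N} = F \<union> K" .
  have ie': "induced_edges (add_edge E u v) (insert v N) = card F + card K"
  proof -
    have "F \<inter> K = {}" unfolding F_def K_def using vN by auto
    hence "card (F \<union> K) = card F + card K" using finF card_Un_disjoint by blast
    thus ?thesis unfolding induced_edges_def using eqFK by simp
  qed
  have KI: "K = (\<lambda>x. {v, x}) ` I"
  proof
    show "K \<subseteq> (\<lambda>x. {v, x}) ` I"
    proof
      fix e assume e: "e \<in> K"
      have "card e = 2" using e edge unfolding K_def by blast
      then obtain x y where xy: "x \<noteq> y" "e = {x, y}"
        by (auto simp: card_2_iff)
      from e xy have "v = x \<or> v = y" unfolding K_def by auto
      then obtain z where z: "e = {v, z}" "z \<noteq> v" using xy by (auto simp: insert_commute)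
      hence "z \<in> N" using e unfolding K_def by auto
      moreover have "z \<in> nbhd V E v" using z e NV \<open>z \<in> N\<close>
        unfolding nbhd_def adjacent_def K_def by auto
      ultimately show "e \<in> (\<lambda>x. {v, x}) ` I" using z unfolding I_def by auto
    qed
  next
    show "(\<lambda>x. {v, x}) ` I \<subseteq> K"
      unfolding I_def K_def nbhd_def adjacent_def by auto
  qed
  have "inj_on (\<lambda>x. {v, x}) I"
    unfolding inj_on_def I_def using vN by (auto simp: doubleton_eq_iff)
  hence cK: "card K = card I" using KI card_image by blast
  have kd: "card I \<le> d" unfolding I_def d_def using finN by (simp add: card_mono)
  have kd_iff: "card I = d \<longleftrightarrow> N \<subseteq> nbhd V E v"
    unfolding I_def d_def using finN
    by (metis Int_lower1 card_subset_eq inf.absorb_iff1 inf.orderE)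
  have F_iff: "F = {} \<longleftrightarrow> independent_set V E N"
  proof
    assume F: "F = {}"
    show "independent_set V E N" unfolding independent_set_def
    proof (intro conjI ballI NV)
      fix x y assume "x \<in> N" "y \<in> N"
      thus "\<not> adjacent E x y" using F unfolding F_def adjacent_def by auto
    qed
  next
    assume ind: "independent_set V E N"
    show "F = {}"
    proof (rule ccontr)
      assume "F \<noteq> {}"
      then obtain e where e: "e \<in> E" "e \<subseteq> N" unfolding F_def by auto
      have "card e = 2" using e edge by blast
      then obtain x y where "e = {x, y}" by (auto simp: card_2_iff)
      thus False using e ind unfolding independent_set_def adjacent_def by auto
    qed
  qed
  have F1: "d < 2 \<Longrightarrow> F = {}"
  proof (rule ccontr)
    assume "d < 2" "F \<noteq> {}"
    then obtain e where e: "e \<in> E" "e \<subseteq> N" unfolding F_def by auto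
    hence "card e \<le> d" unfolding d_def using finN card_mono by blast
    thus False using edge e \<open>d < 2\<close> by fastforce
  qed
  have ieN: "induced_edges E N = card F" unfolding induced_edges_def F_def by simp
  have d1: "d \<ge> 1" using assms(6) dN by simp
  have C': "clustering V (add_edge E u v) u = (real (card F) + real (card I)) / ((real d + 1) * real d / 2)"
    unfolding clustering_def d' N' ie' using d1 cK by (simp add: real_choose2)
  show ?thesis
  proof (cases "d \<ge> 2")
    case True
    have C: "clustering V E u = real (card F) / (real d * (real d - 1) / 2)"
      unfolding clustering_def dN ieN[unfolded N_def] using True
      by (simp add: real_choose2 N_def)
    define m where "m = real (card F)"
    define k where "k = real (card I)"
    have kk: "k \<le> real d" "k \<ge> 0" using kd unfolding k_def by auto
    have dd: "real d \<ge> 2" using True by simp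
    have eq: "clustering V (add_edge E u v) u - clustering V E u
       = 2 / (real d + 1) - (2 * (real d - k) * (real d - 1) + 4 * m) / (real d * (real d + 1) * (real d - 1))"
      unfolding C' C m_def[symmetric] k_def[symmetric]
      using arith_main[OF dd _ kk(2) kk(1), of m] m_def by simp
    have pos: "real d * (real d + 1) * (real d - 1) > 0" using dd by simp
    have num: "2 * (real d - k) * (real d - 1) + 4 * m \<ge> 0" using kk dd m_def by simp
    have numz: "2 * (real d - k) * (real d - 1) + 4 * m = 0 \<longleftrightarrow> k = real d \<and> m = 0"
    proof
      assume h: "2 * (real d - k) * (real d - 1) + 4 * m = 0"
      have a: "2 * (real d - k) * (real d - 1) \<ge> 0" using kk dd by simp
      have b: "m \<ge> 0" using m_def by simp
      have "m = 0" using a b h by linarith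
      hence "(real d - k) * (real d - 1) = 0" using h by simp
      thus "k = real d \<and> m = 0" using dd \<open>m = 0\<close> by simp
    qed simp
    have "(2 * (real d - k) * (real d - 1) + 4 * m) / (real d * (real d + 1) * (real d - 1)) \<ge> 0"
      using num pos by simp
    moreover have "(2 * (real d - k) * (real d - 1) + 4 * m) / (real d * (real d + 1) * (real d - 1)) = 0
       \<longleftrightarrow> k = real d \<and> m = 0" using numz pos dd by simp
    moreover have "k = real d \<longleftrightarrow> card I = d" unfolding k_def by simp
    moreover have "m = 0 \<longleftrightarrow> F = {}" unfolding m_def using finF by simp
    ultimately show ?thesis unfolding eq dN using kd_iff F_iff N_def by auto
  next
    case False
    hence d1': "d = 1" using d1 by simp
    have C: "clustering V E u = 0" unfolding clustering_def dN using d1' by simp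
    have F0: "F = {}" using F1 d1' by simp
    have "card I \<le> 1" using kd d1' by simp
    thus ?thesis unfolding C' C dN d1' using F0 F_iff kd_iff d1' N_def by auto
  qed
qed

end
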